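(* For any discrete set $S\subset \mathbb{R}^2$ with finite Helly number $\mathrm{He}(S) \geq 4$, we have $\mathrm{Tv}(S,m) \leq \mathrm{He}(S)(m-1) + 1$ whenever $m \geq 3$. For the case $m = 2$, we have $\mathrm{Tv}(S,2) \leq \mathrm{He}(S) + 2$.
   Context: For $S\subseteq\mathbb{R}^d$ and an integer $m\geq 2$, the Tverberg number $\mathrm{Tv}(S,m)$ is the smallest positive integer $n$ such that any multiset of $n$ points in $S$ admits a partition into $m$ submultisets $A_1,\dots,A_m$ with $\left(\bigcap_{i=1}^m\mathrm{conv}(A_i)\right)\cap S\neq\varnothing$ (and $\mathrm{Tv}(S,m)=\infty$ if no such number exists). The Helly number $\mathrm{He}(S)$ is the smallest positive integer $h$ such that whenever $\mathcal{F}$ is a finite family of convex sets such that every subfamily of at most $h$ members has intersection meeting $S$, then $\bigcap\mathcal{F}$ meets $S$. *)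

theory Defs
  imports "HOL-Analysis.Analysis" "HOL-Library.Multiset" "HOL-Library.Extended_Nat"
begin

definition discrete_set :: "(real^2) set \<Rightarrow> bool" where
  "discrete_set S \<longleftrightarrow> (\<forall>x. \<not> x islimpt S)"

definition tverberg_prop :: "(real^2) set \<Rightarrow> nat \<Rightarrow> nat \<Rightarrow> bool" where
  "tverberg_prop S m n \<longleftrightarrow>
     (\<forall>M :: (real^2) multiset. set_mset M \<subseteq> S \<and> size M = n \<longrightarrow>
        (\<exists>A :: nat \<Rightarrow> (real^2) multiset. (\<Sum>i<m. A i) = M \<and>
             (\<Inter>i<m. convex hull (set_mset (A i))) \<inter> S \<noteq> {}))"

definition tverberg_number :: "(real^2) set \<Rightarrow> nat \<Rightarrow> enat" where
  "tverberg_number S m =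
     (if \<exists>n>0. tverberg_prop S m n
      then enat (LEAST n. n > 0 \<and> tverberg_prop S m n) else \<infinity>)"

definition helly_prop :: "(real^2) set \<Rightarrow> nat \<Rightarrow> bool" where
  "helly_prop S h \<longleftrightarrow>
     (\<forall>F :: (real^2) set set. finite F \<and> (\<forall>C\<in>F. convex C) \<longrightarrow>
        (\<forall>G\<subseteq>F. card G \<le> h \<longrightarrow> \<Inter>G \<inter> S \<noteq> {}) \<longrightarrow> \<Inter>F \<inter> S \<noteq> {})"

definition helly_number :: "(real^2) set \<Rightarrow> enat" where
  "helly_number S =
     (if \<exists>h>0. helly_prop S h then enat (LEAST h. h > 0 \<and> helly_prop S h) else \<infinity>)"

end

theory Submission
  imports Defs
begin

lemma inner2: "inner (u::real^2) z = u$1 * z$1 + u$2 * z$2"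
  by (simp add: inner_vec_def sum_2)

lemma norm2: "norm (z::real^2) = sqrt ((z$1)^2 + (z$2)^2)"
  by (simp add: norm_vec_def L2_set_def sum_2)

definition ang :: "real^2 \<Rightarrow> real" where
  "ang z = (SOME t. 0 \<le> t \<and> t < 2*pi \<and> z = norm z *\<^sub>R vector [cos t, sin t])"

lemma ang_ex: fixes z :: "real^2" shows "\<exists>t. 0 \<le> t \<and> t < 2*pi \<and> z = norm z *\<^sub>R vector [cos t, sin t]"
proof (cases "z = 0")
  case True
  then show ?thesis by (intro exI[of _ 0]) simp
next
  case False
  then have np: "norm z > 0" by simp
  have "(z$1 / norm z)^2 + (z$2 / norm z)^2 = 1"
  proof -
    have e: "(norm z)^2 = (z$1)^2 + (z$2)^2" unfolding norm2 by simp
    then have s: "(z$1)^2 + (z$2)^2 \<noteq> 0" using np by auto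
    show ?thesis unfolding e power_divide add_divide_distrib[symmetric] using s by simp
  qed
  then obtain t where t: "0 \<le> t" "t < 2*pi" "z$1 / norm z = cos t" "z$2 / norm z = sin t"
    by (rule sincos_total_2pi)
  have "z = norm z *\<^sub>R vector [cos t, sin t]"
    unfolding vec_eq_iff forall_2 using t(3,4) np by (simp add: field_simps)
  then show ?thesis using t by blast
qed

lemma ang: "0 \<le> ang z" "ang z < 2*pi" "z = norm z *\<^sub>R vector [cos (ang z), sin (ang z)]"
  using someI_ex[OF ang_ex[of z]] unfolding ang_def by blast+

lemma inner_cs: "inner (vector [cos a, sin a] :: real^2) z = norm z * cos (ang z - a)"
proof -
  have "inner (vector [cos a, sin a] :: real^2) z
      = inner (vector [cos a, sin a] :: real^2) (norm z *\<^sub>R vector [cos (ang z), sin (ang z)])"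
    using ang(3)[of z] by simp
  also have "\<dots> = norm z * cos (ang z - a)"
    unfolding inner2 by (simp add: cos_diff algebra_simps)
  finally show ?thesis .
qed

lemma inner_ang: "inner u z = norm u * norm z * cos (ang z - ang u)"
proof -
  have "inner u z = inner (norm u *\<^sub>R vector [cos (ang u), sin (ang u)]) z"
    using ang(3)[of u] by simp
  also have "\<dots> = norm u * norm z * cos (ang z - ang u)"
    using inner_cs by simp
  finally show ?thesis .
qed

lemma pos_mult_nonneg_iff: "0 < (p::real) \<Longrightarrow> 0 \<le> p * c \<longleftrightarrow> 0 \<le> c"
  by (auto simp: zero_le_mult_iff)

definition inarc :: "real \<Rightarrow> real \<Rightarrow> bool" where
  "inarc \<alpha> t \<longleftrightarrow> (\<exists>k::int. \<alpha> \<le> t + 2*pi*k \<and> t + 2*pi*k \<le> \<alpha> + pi)"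

lemma cos_shift: fixes t :: real and k :: int shows "cos (t + 2*pi* of_int k) = cos t"
  by (metis cos_add cos_int_2pin sin_int_2pin mult_1_right mult_zero_right diff_zero)

lemma cos_nonneg_iff: "0 \<le> cos t \<longleftrightarrow> (\<exists>k::int. -(pi/2) \<le> t + 2*pi*k \<and> t + 2*pi*k \<le> pi/2)"
proof
  assume "\<exists>k::int. -(pi/2) \<le> t + 2*pi*k \<and> t + 2*pi*k \<le> pi/2"
  then obtain k :: int where "-(pi/2) \<le> t + 2*pi*k" "t + 2*pi*k \<le> pi/2" by blast
  then have "0 \<le> cos (t + 2*pi*k)" by (rule cos_ge_zero)
  then show "0 \<le> cos t" by (simp only: cos_shift)
next
  assume c: "0 \<le> cos t"
  define k :: int where "k = - \<lfloor>(t + pi) / (2*pi)\<rfloor>"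
  define s where "s = t + 2*pi*k"
  have f1: "of_int \<lfloor>(t + pi) / (2*pi)\<rfloor> \<le> (t + pi) / (2*pi)" by (rule of_int_floor_le)
  have f2: "(t + pi) / (2*pi) < of_int \<lfloor>(t + pi) / (2*pi)\<rfloor> + 1" by (rule real_of_int_floor_add_one_gt)
  have pp: "0 < 2*pi" using pi_gt_zero by simp
  have "2*pi * of_int \<lfloor>(t + pi) / (2*pi)\<rfloor> \<le> 2*pi * ((t + pi) / (2*pi))"
    using mult_left_mono[OF f1, of "2*pi"] pp by linarith
  then have "2*pi * of_int \<lfloor>(t + pi) / (2*pi)\<rfloor> \<le> t + pi" using pp by simp
  then have s1: "-pi \<le> s" unfolding s_def k_def by simp
  have "2*pi * ((t + pi) / (2*pi)) < 2*pi * (of_int \<lfloor>(t + pi) / (2*pi)\<rfloor> + 1)"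
    using mult_strict_left_mono[OF f2 pp] by linarith
  then have "t + pi < 2*pi * (of_int \<lfloor>(t + pi) / (2*pi)\<rfloor> + 1)" using pp by simp
  then have s2: "s < pi" unfolding s_def k_def by (simp add: algebra_simps)
  have cs: "0 \<le> cos s" using c unfolding s_def by (simp only: cos_shift)
  have "-(pi/2) \<le> s"
  proof (rule ccontr)
    assume "\<not> ?thesis"
    then have "cos (-s) < 0" using s1 by (intro cos_lt_zero_pi) (auto)
    then show False using cs by simp
  qed
  moreover have "s \<le> pi/2"
  proof (rule ccontr)
    assume "\<not> ?thesis"
    then have "cos s < 0" using s2 by (intro cos_lt_zero_pi) (auto)
    then show False using cs by simp
  qed
  ultimately show "\<exists>k::int. -(pi/2) \<le> t + 2*pi*k \<and> t + 2*pi*k \<le> pi/2"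
    unfolding s_def by blast
qed

lemma cos_inarc: "0 \<le> cos (t - (\<alpha> + pi/2)) \<longleftrightarrow> inarc \<alpha> t"
proof -
  have "0 \<le> cos (t - (\<alpha> + pi/2)) \<longleftrightarrow>
     (\<exists>k::int. -(pi/2) \<le> t - (\<alpha> + pi/2) + 2*pi*k \<and> t - (\<alpha> + pi/2) + 2*pi*k \<le> pi/2)"
    by (rule cos_nonneg_iff)
  also have "\<dots> \<longleftrightarrow> inarc \<alpha> t" unfolding inarc_def by (rule ex_cong1) linarith
  finally show ?thesis .
qed

lemma inner_inarc:
  assumes "u \<noteq> 0" "z \<noteq> 0"
  shows "0 \<le> inner u z \<longleftrightarrow> inarc (ang u - pi/2) (ang z)"
proof -
  have "0 \<le> inner u z \<longleftrightarrow> 0 \<le> cos (ang z - ang u)"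
    unfolding inner_ang using assms pos_mult_nonneg_iff[of "norm u * norm z"] by simp
  also have "\<dots> \<longleftrightarrow> inarc (ang u - pi/2) (ang z)"
    using cos_inarc[of "ang z" "ang u - pi/2"] by simp
  finally show ?thesis .
qed

lemma inner_inarc2:
  assumes "z \<noteq> 0"
  shows "0 \<le> inner (vector [cos (\<alpha> + pi/2), sin (\<alpha> + pi/2)] :: real^2) z \<longleftrightarrow> inarc \<alpha> (ang z)"
  unfolding inner_cs using assms cos_inarc pos_mult_nonneg_iff[of "norm z"] by simp

locale circ =
  fixes \<Theta> :: "int \<Rightarrow> real" and n d :: nat
  assumes mono: "\<And>i j. i \<le> j \<Longrightarrow> \<Theta> i \<le> \<Theta> j"
    and per: "\<And>i. \<Theta> (i + int n) = \<Theta> i + 2*pi"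
    and d1: "1 \<le> d"
    and dep: "\<And>\<alpha>. d \<le> card {i. \<alpha> \<le> \<Theta> i \<and> \<Theta> i \<le> \<alpha> + pi}"
begin

lemma F:
  assumes "x \<le> y" "y - x \<le> int d"
  shows "\<Theta> y - \<Theta> x \<le> pi"
proof (rule ccontr)
  assume "\<not> ?thesis"
  define \<alpha> where "\<alpha> = (\<Theta> x + \<Theta> y - pi)/2"
  have sub: "{i. \<alpha> \<le> \<Theta> i \<and> \<Theta> i \<le> \<alpha> + pi} \<subseteq> {x<..<y}"
  proof
    fix i assume i: "i \<in> {i. \<alpha> \<le> \<Theta> i \<and> \<Theta> i \<le> \<alpha> + pi}"
    have "x < i"
    proof (rule ccontr)
      assume "\<not> x < i" then have "\<Theta> i \<le> \<Theta> x" using mono by simp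
      then show False using i \<open>\<not> \<Theta> y - \<Theta> x \<le> pi\<close> unfolding \<alpha>_def by auto
    qed
    moreover have "i < y"
    proof (rule ccontr)
      assume "\<not> i < y" then have "\<Theta> y \<le> \<Theta> i" using mono by simp
      then show False using i \<open>\<not> \<Theta> y - \<Theta> x \<le> pi\<close> unfolding \<alpha>_def by (auto simp: field_simps)
    qed
    ultimately show "i \<in> {x<..<y}" by simp
  qed
  have "card {i. \<alpha> \<le> \<Theta> i \<and> \<Theta> i \<le> \<alpha> + pi} \<le> card {x<..<y}"
    by (rule card_mono[OF _ sub]) simp
  also have "\<dots> = nat (y - x - 1)" by simp
  finally have "d \<le> nat (y - x - 1)" using dep[of \<alpha>] by linarith
  then have "int d \<le> int (nat (y - x - 1))" by linarith
  then show False using assms d1 by linarith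
qed

lemma per_gt: "\<Theta> x + pi < \<Theta> (x + int n)"
  using per[of x] pi_gt_zero by linarith

lemma n_pos: "0 < n"
proof (rule ccontr)
  assume "\<not> 0 < n" then have "n = 0" by simp
  then show False using per[of 0] pi_gt_zero by simp
qed

definition e :: "int \<Rightarrow> int" where
  "e x = Max {y. x \<le> y \<and> \<Theta> y \<le> \<Theta> x + pi}"

lemma e_set_sub: "{y. x \<le> y \<and> \<Theta> y \<le> \<Theta> x + pi} \<subseteq> {x..x + int n}"
proof
  fix y assume y: "y \<in> {y. x \<le> y \<and> \<Theta> y \<le> \<Theta> x + pi}"
  have "y \<le> x + int n"
  proof (rule ccontr)
    assume "\<not> ?thesis" then have "\<Theta> (x + int n) \<le> \<Theta> y" using mono by simp
    then show False using y per_gt[of x] by simp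
  qed
  then show "y \<in> {x..x + int n}" using y by simp
qed

lemma e_props:
  shows "x \<le> e x" "\<Theta> (e x) \<le> \<Theta> x + pi"
    and "\<And>y. x \<le> y \<Longrightarrow> \<Theta> y \<le> \<Theta> x + pi \<Longrightarrow> y \<le> e x"
proof -
  have fin: "finite {y. x \<le> y \<and> \<Theta> y \<le> \<Theta> x + pi}"
    by (rule finite_subset[OF e_set_sub]) simp
  have ne: "x \<in> {y. x \<le> y \<and> \<Theta> y \<le> \<Theta> x + pi}" using pi_gt_zero by simp
  have "e x \<in> {y. x \<le> y \<and> \<Theta> y \<le> \<Theta> x + pi}"
    unfolding e_def using Max_in[OF fin] ne by blast
  then show "x \<le> e x" "\<Theta> (e x) \<le> \<Theta> x + pi" by auto
  show "\<And>y. x \<le> y \<Longrightarrow> \<Theta> y \<le> \<Theta> x + pi \<Longrightarrow> y \<le> e x"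
    unfolding e_def using Max_ge[OF fin] by blast
qed

lemma e_ge: "x + int d \<le> e x"
  using e_props(3)[of x "x + int d"] F[of x "x + int d"] by simp

lemma e_mono_le: "y \<le> e x \<Longrightarrow> \<Theta> y \<le> \<Theta> x + pi"
  using mono[of y "e x"] e_props(2)[of x] by simp

lemma E2: "\<Theta> x + pi \<le> \<Theta> (e (e x))"
proof -
  let ?y = "e x"
  have "\<not> (?y + 1 \<le> e x)" by simp
  then have a: "\<Theta> x + pi < \<Theta> (?y + 1)"
    using e_props(3)[of x "?y+1"] e_props(1)[of x] by force
  have "\<Theta> (?y + 1) - \<Theta> ?y \<le> pi" using F[of ?y "?y+1"] d1 by simp
  then have "?y + 1 \<le> e ?y" using e_props(3)[of ?y "?y+1"] by simp
  then have "\<Theta> (?y + 1) \<le> \<Theta> (e ?y)" using mono by simp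
  then show ?thesis using a by simp
qed

lemma triple:
  assumes nd: "3*d \<le> n"
  shows "\<exists>x1 x2. int d \<le> x1 \<and> x1 + int d \<le> x2 \<and> x2 + int d \<le> int n \<and>
     \<Theta> x1 \<le> \<Theta> 0 + pi \<and> \<Theta> x2 \<le> \<Theta> x1 + pi \<and> \<Theta> 0 + pi \<le> \<Theta> x2"
proof -
  define x1 where "x1 = min (e 0) (int n - 2 * int d)"
  define x2 where "x2 = min (e x1) (int n - int d)"
  have h1: "int d \<le> x1" unfolding x1_def using e_ge[of 0] nd by simp
  have h2: "x1 + int d \<le> x2" unfolding x2_def using e_ge[of x1] nd x1_def by simp
  have h3: "x2 + int d \<le> int n" unfolding x2_def by simp
  have h4: "\<Theta> x1 \<le> \<Theta> 0 + pi" using e_mono_le[of x1 0] x1_def by simp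
  have h5: "\<Theta> x2 \<le> \<Theta> x1 + pi" using e_mono_le[of x2 x1] x2_def by simp
  have h6: "\<Theta> 0 + pi \<le> \<Theta> x2"
  proof (cases "x2 = int n - int d")
    case True
    have "\<Theta> (0 + int n) - \<Theta> x2 \<le> pi" using F[of x2 "0 + int n"] True by simp
    then show ?thesis using per[of 0] by simp
  next
    case False
    then have x2e: "x2 = e x1" unfolding x2_def by linarith
    show ?thesis
    proof (cases "x1 = e 0")
      case True
      then show ?thesis using E2[of 0] x2e by simp
    next
      case False
      then have "x1 = int n - 2 * int d" unfolding x1_def by linarith
      then have "int n - int d \<le> x2" using x2e e_ge[of x1] by simp
      then have "x2 = int n - int d" unfolding x2_def by simp
      then show ?thesis using \<open>x2 \<noteq> int n - int d\<close> by simp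
    qed
  qed
  show ?thesis using h1 h2 h3 h4 h5 h6 by blast
qed


lemma cover:
  assumes "\<Theta> x1 \<le> \<Theta> 0 + pi" "\<Theta> x2 \<le> \<Theta> x1 + pi" "\<Theta> 0 + pi \<le> \<Theta> x2"
  shows "\<exists>t\<in>{0,x1,x2}. \<exists>k::int. \<alpha> \<le> \<Theta> t + 2*pi*k \<and> \<Theta> t + 2*pi*k \<le> \<alpha> + pi"
proof -
  define g where "g = \<Theta> 0"
  define q where "q = \<lfloor>(\<alpha> - g) / (2*pi)\<rfloor>"
  define \<beta> where "\<beta> = \<alpha> - 2*pi*q"
  have pp: "0 < 2*pi" using pi_gt_zero by simp
  have f1: "of_int q \<le> (\<alpha> - g) / (2*pi)" unfolding q_def by (rule of_int_floor_le)
  have f2: "(\<alpha> - g) / (2*pi) < of_int q + 1" unfolding q_def by (rule real_of_int_floor_add_one_gt)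
  have "2*pi * of_int q \<le> 2*pi * ((\<alpha> - g) / (2*pi))"
    using mult_left_mono[OF f1, of "2*pi"] pp by linarith
  then have b1: "g \<le> \<beta>" unfolding \<beta>_def using pp by simp
  have "2*pi * ((\<alpha> - g) / (2*pi)) < 2*pi * (of_int q + 1)"
    using mult_strict_left_mono[OF f2 pp] by linarith
  moreover have "2*pi * ((\<alpha> - g) / (2*pi)) = \<alpha> - g" using pp by simp
  ultimately have b2: "\<beta> < g + 2*pi" unfolding \<beta>_def by (simp add: algebra_simps)
  show ?thesis
  proof (cases "\<beta> \<le> \<Theta> x1")
    case True
    have "\<alpha> \<le> \<Theta> x1 + 2*pi*q \<and> \<Theta> x1 + 2*pi*q \<le> \<alpha> + pi"
      using True b1 assms(1) unfolding \<beta>_def g_def by (intro conjI; linarith)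
    then show ?thesis by blast
  next
    case F1: False
    show ?thesis
    proof (cases "\<beta> \<le> \<Theta> x2")
      case True
      have "\<alpha> \<le> \<Theta> x2 + 2*pi*q \<and> \<Theta> x2 + 2*pi*q \<le> \<alpha> + pi"
        using True F1 assms(2) unfolding \<beta>_def by (intro conjI; linarith)
      then show ?thesis by blast
    next
      case False
      have "\<alpha> \<le> \<Theta> 0 + 2*pi*(q+1) \<and> \<Theta> 0 + 2*pi*(q+1) \<le> \<alpha> + pi"
        using False b2 assms(3) unfolding \<beta>_def g_def by (intro conjI; simp add: algebra_simps; linarith)
      then show ?thesis by blast
    qed
  qed
qed

end

lemma sep:
  fixes a b t t' x1 x2 :: int and n d :: nat
  assumes "int d \<le> x1" "x1 + int d \<le> x2" "x2 + int d \<le> int n"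
    and "t \<in> {0,x1,x2}" "t' \<in> {0,x1,x2}" "t \<noteq> t'"
    and "a mod int n = t mod int n" "b mod int n = t' mod int n"
  shows "int d \<le> \<bar>a - b\<bar>"
proof -
  have "int n dvd ((a - b) - (t - t'))"
    using assms(7,8) by (metis mod_diff_cong mod_eq_dvd_iff)
  then obtain c where c: "(a - b) - (t - t') = int n * c" by (auto elim: dvdE)
  have tt: "int d \<le> \<bar>t - t'\<bar>" "\<bar>t - t'\<bar> \<le> int n - int d"
    using assms(1-6) by auto
  consider "c = 0" | "1 \<le> c" | "c \<le> -1" by linarith
  then show ?thesis
  proof cases
    case 1 then show ?thesis using c tt by simp
  next
    case 2
    then have "int n * 1 \<le> int n * c" by (intro mult_left_mono) auto
    then show ?thesis using c tt by linarith
  next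
    case 3
    then have "int n * c \<le> int n * (-1)" by (intro mult_left_mono) auto
    then show ?thesis using c tt by linarith
  qed
qed

lemma card_interval:
  fixes I :: "int set"
  assumes fin: "finite I" and conv: "\<forall>a\<in>I. \<forall>c\<in>I. \<forall>b. a \<le> b \<and> b \<le> c \<longrightarrow> b \<in> I"
    and "a \<in> I" "b \<in> I" "a \<le> b"
  shows "b - a + 1 \<le> int (card I)"
proof -
  have "{a..b} \<subseteq> I"
  proof
    fix x assume "x \<in> {a..b}"
    then have "a \<le> x \<and> x \<le> b" by simp
    then show "x \<in> I" using conv assms(3) assms(4) by blast
  qed
  then have "card {a..b} \<le> card I" by (rule card_mono[OF fin])
  then show ?thesis using assms(5) by simp
qed

lemma count_hits:
  fixes I :: "int set" and T :: "int set" and x1 x2 :: int and n d :: nat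
  assumes fin: "finite I" and conv: "\<forall>a\<in>I. \<forall>c\<in>I. \<forall>b. a \<le> b \<and> b \<le> c \<longrightarrow> b \<in> I"
    and dI: "d \<le> card I" and d1: "1 \<le> d"
    and g: "int d \<le> x1" "x1 + int d \<le> x2" "x2 + int d \<le> int n"
    and T: "T \<subseteq> {0,x1,x2}"
    and lift: "\<And>t. t \<in> T \<Longrightarrow> \<exists>i\<in>I. i mod int n = t mod int n"
  shows "card T + d \<le> card I + 1"
proof -
  have fT: "finite T" using T finite_subset by auto
  have S3: "card ({0,x1,x2}::int set) \<le> 3" by (auto simp: card_insert_if)
  have c3: "card T \<le> 3" using card_mono[OF _ T] S3 by simp
  consider "card T \<le> 1" | "card T = 2" | "card T = 3" using c3 by linarith
  then show ?thesis
  proof cases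
    case 1 then show ?thesis using dI by simp
  next
    case 2
    then obtain t t' where tt: "t \<in> T" "t' \<in> T" "t \<noteq> t'" by (auto simp: card_2_iff)
    obtain a where a: "a \<in> I" "a mod int n = t mod int n" using lift tt by blast
    obtain b where b: "b \<in> I" "b mod int n = t' mod int n" using lift tt by blast
    have "int d \<le> \<bar>a - b\<bar>" by (rule sep[OF g _ _ tt(3) a(2) b(2)]) (use T tt in auto)
    moreover have "a - b + 1 \<le> int (card I)" if "b \<le> a" using card_interval[OF fin conv b(1) a(1) that] .
    moreover have "b - a + 1 \<le> int (card I)" if "a \<le> b" using card_interval[OF fin conv a(1) b(1) that] .
    ultimately show ?thesis using 2 by linarith
  next
    case 3
    then have TT: "T = {0,x1,x2}" using card_seteq[OF _ T] S3 by simp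
    obtain a where a: "a \<in> I" "a mod int n = 0 mod int n" using lift TT by blast
    obtain b where b: "b \<in> I" "b mod int n = x1 mod int n" using lift TT by blast
    obtain c where c: "c \<in> I" "c mod int n = x2 mod int n" using lift TT by blast
    have ne: "0 \<noteq> x1" "x1 \<noteq> x2" "0 \<noteq> x2" using g d1 by auto
    have ab: "int d \<le> \<bar>a - b\<bar>" by (rule sep[OF g _ _ ne(1) a(2) b(2)]) auto
    have bc: "int d \<le> \<bar>b - c\<bar>" by (rule sep[OF g _ _ ne(2) b(2) c(2)]) auto
    have ac: "int d \<le> \<bar>a - c\<bar>" by (rule sep[OF g _ _ ne(3) a(2) c(2)]) auto
    have ci: "\<And>p q. p \<in> I \<Longrightarrow> q \<in> I \<Longrightarrow> p \<le> q \<Longrightarrow> q - p + 1 \<le> int (card I)"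
      using card_interval[OF fin conv] by simp
    have "2 * int d + 1 \<le> int (card I)"
    proof -
      consider "a \<le> b" "b \<le> c" | "a \<le> c" "c \<le> b" | "b \<le> a" "a \<le> c" | "b \<le> c" "c \<le> a"
        | "c \<le> a" "a \<le> b" | "c \<le> b" "b \<le> a" by linarith
      then show ?thesis
      proof cases
        case 1 then show ?thesis using ci[OF a(1) c(1)] ab bc by linarith
      next
        case 2 then show ?thesis using ci[OF a(1) b(1)] ac bc by linarith
      next
        case 3 then show ?thesis using ci[OF b(1) c(1)] ab ac by linarith
      next
        case 4 then show ?thesis using ci[OF b(1) a(1)] bc ac by linarith
      next
        case 5 then show ?thesis using ci[OF c(1) b(1)] ac ab by linarith
      next
        case 6 then show ?thesis using ci[OF c(1) a(1)] bc ab by linarith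
      qed
    qed
    then show ?thesis using 3 d1 by linarith
  qed
qed

lemma dvd_gap:
  fixes n a b :: int
  assumes "0 < n" "n dvd (b - a)" "a < b"
  shows "a + n \<le> b"
proof -
  obtain c where c: "b - a = n * c" using assms(2) by (auto elim: dvdE)
  then have "0 < n * c" using assms(3) by simp
  then have "0 < c" using assms(1) zero_less_mult_pos by blast
  then have "n * 1 \<le> n * c" using assms(1) by (intro mult_left_mono) auto
  then show ?thesis using c by simp
qed

locale angs =
  fixes xs :: "(real^2) list"
  assumes srt: "sorted (map ang xs)" and ne: "xs \<noteq> []"
begin

abbreviation "n \<equiv> length xs"

definition \<Theta> :: "int \<Rightarrow> real" where
  "\<Theta> i = ang (xs ! nat (i mod int n)) + 2*pi * of_int (i div int n)"

lemma npos: "0 < n" using ne by simp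

lemma modj: "j < n \<Longrightarrow> (int j + k * int n) mod int n = int j"
  by (simp add: mod_pos_pos_trivial)

lemma divj: "j < n \<Longrightarrow> (int j + k * int n) div int n = k"
  using npos by (simp add: div_pos_pos_trivial)

lemma Theta_eq: "j < n \<Longrightarrow> \<Theta> (int j + k * int n) = ang (xs ! j) + 2*pi * of_int k"
  unfolding \<Theta>_def using modj divj by simp

lemma angnth: "j < n \<Longrightarrow> ang (xs ! j) \<le> ang (xs ! j') \<or> \<not> (j \<le> j' \<and> j' < n)"
  using sorted_nth_mono[OF srt, of j j'] by auto

lemma Theta_mono: "i \<le> j \<Longrightarrow> \<Theta> i \<le> \<Theta> j"
proof -
  assume ij: "i \<le> j"
  define q where "q = i div int n"
  define r where "r = i mod int n"
  define q' where "q' = j div int n"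
  define r' where "r' = j mod int n"
  have np: "0 < int n" using npos by simp
  have r: "0 \<le> r" "r < int n" unfolding r_def using np by simp_all
  have r': "0 \<le> r'" "r' < int n" unfolding r'_def using np by simp_all
  have i: "i = q * int n + r" unfolding q_def r_def by simp
  have j: "j = q' * int n + r'" unfolding q'_def r'_def by simp
  have qq: "q \<le> q'" unfolding q_def q'_def using ij np by (simp add: zdiv_mono1)
  have Ti: "\<Theta> i = ang (xs ! nat r) + 2*pi * of_int q" unfolding \<Theta>_def q_def r_def by simp
  have Tj: "\<Theta> j = ang (xs ! nat r') + 2*pi * of_int q'" unfolding \<Theta>_def q'_def r'_def by simp
  show ?thesis
  proof (cases "q = q'")
    case True
    then have "r \<le> r'" using ij i j by simp
    then have "ang (xs ! nat r) \<le> ang (xs ! nat r')"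
      using sorted_nth_mono[OF srt, of "nat r" "nat r'"] r r' by simp
    then show ?thesis using Ti Tj True by simp
  next
    case False
    then have "q + 1 \<le> q'" using qq by simp
    then have "2*pi * of_int (q+1) \<le> 2*pi * of_int q'" using pi_gt_zero by simp
    moreover have "ang (xs ! nat r) < 2*pi" by (rule ang(2))
    moreover have "0 \<le> ang (xs ! nat r')" by (rule ang(1))
    ultimately show ?thesis using Ti Tj by (simp add: algebra_simps)
  qed
qed

lemma Theta_per: "\<Theta> (i + int n) = \<Theta> i + 2*pi"
  unfolding \<Theta>_def using npos by (simp add: algebra_simps)

lemma CNT:
  "card {i. \<alpha> \<le> \<Theta> i \<and> \<Theta> i \<le> \<alpha> + pi} = card {j. j < n \<and> inarc \<alpha> (ang (xs ! j))}"
proof -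
  let ?A = "{i. \<alpha> \<le> \<Theta> i \<and> \<Theta> i \<le> \<alpha> + pi}"
  let ?B = "{j. j < n \<and> inarc \<alpha> (ang (xs ! j))}"
  let ?f = "\<lambda>i. nat (i mod int n)"
  have np: "0 < int n" using npos by simp
  have nm: "\<And>i. int (nat (i mod int n)) = i mod int n" using np by simp
  have "bij_betw ?f ?A ?B"
  proof (rule bij_betw_imageI)
    show "inj_on ?f ?A"
    proof (rule inj_onI)
      fix i i' assume i: "i \<in> ?A" and i': "i' \<in> ?A" and eq: "?f i = ?f i'"
      have m: "i mod int n = i' mod int n" using arg_cong[OF eq, of int] unfolding nm .
      have b: "\<alpha> \<le> \<Theta> i" "\<Theta> i \<le> \<alpha> + pi" "\<alpha> \<le> \<Theta> i'" "\<Theta> i' \<le> \<alpha> + pi"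
        using i i' by auto
      show "i = i'"
      proof (rule ccontr)
        assume "i \<noteq> i'"
        then consider "i < i'" | "i' < i" by linarith
        then show False
        proof cases
          case 1
          have "int n dvd (i' - i)" using m[symmetric] by (simp only: mod_eq_dvd_iff)
          then have "i + int n \<le> i'" using 1 np by (rule dvd_gap[rotated])
          then have "\<Theta> (i + int n) \<le> \<Theta> i'" by (rule Theta_mono)
          then show False using b Theta_per[of i] pi_gt_zero by linarith
        next
          case 2
          have "int n dvd (i - i')" using m by (simp only: mod_eq_dvd_iff)
          then have "i' + int n \<le> i" using 2 np by (rule dvd_gap[rotated])
          then have "\<Theta> (i' + int n) \<le> \<Theta> i" by (rule Theta_mono)
          then show False using b Theta_per[of i'] pi_gt_zero by linarith
        qed
      qed
    qed
    show "?f ` ?A = ?B"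
    proof
      show "?f ` ?A \<subseteq> ?B"
      proof
        fix j assume "j \<in> ?f ` ?A"
        then obtain i where i: "i \<in> ?A" and j: "j = ?f i" by blast
        have "int j < int n" using j nm[of i] np by simp
        then have jn: "j < n" by linarith
        have T: "\<Theta> i = ang (xs ! j) + 2*pi * of_int (i div int n)" unfolding \<Theta>_def j by (rule refl)
        have "inarc \<alpha> (ang (xs ! j))" unfolding inarc_def
          by (rule exI[of _ "i div int n"]) (use i T in simp)
        then show "j \<in> ?B" using jn by simp
      qed
      show "?B \<subseteq> ?f ` ?A"
      proof
        fix j assume j: "j \<in> ?B"
        have jn: "j < n" and ia: "inarc \<alpha> (ang (xs ! j))" using j by simp_all
        obtain k :: int where k: "\<alpha> \<le> ang (xs ! j) + 2*pi*k" "ang (xs ! j) + 2*pi*k \<le> \<alpha> + pi"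
          using ia unfolding inarc_def by blast
        have T: "\<Theta> (int j + k * int n) = ang (xs ! j) + 2*pi*k" by (rule Theta_eq[OF jn])
        have mem: "int j + k * int n \<in> ?A" using k unfolding mem_Collect_eq T by blast
        have eq: "?f (int j + k * int n) = j" by (simp only: modj[OF jn] nat_int)
        show "j \<in> ?f ` ?A" by (rule image_eqI[where x="int j + k * int n"], rule eq[symmetric], rule mem)
      qed
    qed
  qed
  then show ?thesis by (rule bij_betw_same_card)
qed


lemma Theta_nat: "j < n \<Longrightarrow> \<Theta> (int j) = ang (xs ! j)"
  using Theta_eq[of j 0] by simp

lemma lift:
  assumes "j < n" "inarc \<alpha> (ang (xs ! j))"
  shows "\<exists>i. \<alpha> \<le> \<Theta> i \<and> \<Theta> i \<le> \<alpha> + pi \<and> i mod int n = int j"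
proof -
  obtain k :: int where k: "\<alpha> \<le> ang (xs ! j) + 2*pi*k" "ang (xs ! j) + 2*pi*k \<le> \<alpha> + pi"
    using assms(2) unfolding inarc_def by blast
  have T: "\<Theta> (int j + k * int n) = ang (xs ! j) + 2*pi*k" by (rule Theta_eq[OF assms(1)])
  show ?thesis
    by (rule exI[where x="int j + k * int n"]) (use k T modj[OF assms(1)] in simp)
qed

end

definition depth :: "(real^2) multiset \<Rightarrow> nat \<Rightarrow> bool" where
  "depth M d \<longleftrightarrow> (\<forall>u. d \<le> size (filter_mset (\<lambda>z. 0 \<le> inner u z) M))"

lemma cnt_img: "finite X \<Longrightarrow> size (filter_mset P (image_mset f (mset_set X))) = card {x\<in>X. P (f x)}"
  by (simp add: filter_mset_image_mset)

lemma step_nz: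
  fixes M :: "(real^2) multiset"
  assumes nz: "0 \<notin># M" and dep: "depth M d" and d2: "2 \<le> d" and sz: "3*d \<le> size M"
  shows "\<exists>B. B \<subseteq># M \<and> size B \<le> 3 \<and> 0 \<in> convex hull (set_mset B) \<and> depth (M - B) (d - 1)"
proof -
  obtain xs0 where xs0: "mset xs0 = M" using ex_mset by blast
  define xs where "xs = sort_key ang xs0"
  have mx: "mset xs = M" by (simp add: xs_def xs0)
  have srt: "sorted (map ang xs)" unfolding xs_def by (rule sorted_sort_key)
  have len: "length xs = size M" using mx by (metis size_mset)
  have ne: "xs \<noteq> []" using len sz d2 by auto
  interpret A: angs xs using srt ne by unfold_locales
  let ?n = "length xs"
  have nzx: "\<And>j. j < ?n \<Longrightarrow> xs ! j \<noteq> 0" using nz mx by (metis nth_mem set_mset_mset)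
  have Mimg: "M = image_mset (nth xs) (mset_set {0..<?n})"
  proof -
    have "xs = map (nth xs) [0..<?n]" by (simp add: map_nth)
    then have "mset xs = image_mset (nth xs) (mset [0..<?n])" by (metis mset_map)
    then show ?thesis using mx by simp
  qed
  have cntM: "\<And>P. size (filter_mset P M) = card {j\<in>{0..<?n}. P (xs ! j)}"
    using Mimg cnt_img by (metis finite_atLeastLessThan)
  have pc: "\<And>\<alpha>. {j\<in>{0..<?n}. inarc \<alpha> (ang (xs ! j))} = {j. j < ?n \<and> inarc \<alpha> (ang (xs ! j))}"
    by auto
  have depTh: "\<And>\<alpha>. d \<le> card {i. \<alpha> \<le> A.\<Theta> i \<and> A.\<Theta> i \<le> \<alpha> + pi}"
  proof -
    fix \<alpha>
    let ?u = "vector [cos (\<alpha> + pi/2), sin (\<alpha> + pi/2)] :: real^2"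
    have "d \<le> size (filter_mset (\<lambda>z. 0 \<le> inner ?u z) M)" using dep unfolding depth_def by blast
    also have "\<dots> = card {j\<in>{0..<?n}. 0 \<le> inner ?u (xs ! j)}" by (rule cntM)
    also have "{j\<in>{0..<?n}. 0 \<le> inner ?u (xs ! j)} = {j\<in>{0..<?n}. inarc \<alpha> (ang (xs ! j))}"
      using inner_inarc2 nzx by auto
    also have "card \<dots> = card {i. \<alpha> \<le> A.\<Theta> i \<and> A.\<Theta> i \<le> \<alpha> + pi}" unfolding pc A.CNT ..
    finally show "d \<le> card {i. \<alpha> \<le> A.\<Theta> i \<and> A.\<Theta> i \<le> \<alpha> + pi}" .
  qed
  interpret C: circ A.\<Theta> ?n d
    using A.Theta_mono A.Theta_per d2 depTh by unfold_locales auto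
  obtain x1 x2 where tr: "int d \<le> x1" "x1 + int d \<le> x2" "x2 + int d \<le> int ?n"
     "A.\<Theta> x1 \<le> A.\<Theta> 0 + pi" "A.\<Theta> x2 \<le> A.\<Theta> x1 + pi" "A.\<Theta> 0 + pi \<le> A.\<Theta> x2"
    using C.triple sz len by auto
  define j1 where "j1 = nat x1"
  define j2 where "j2 = nat x2"
  have x1: "x1 = int j1" and x2: "x2 = int j2" unfolding j1_def j2_def using tr by auto
  have jj: "0 < j1" "j1 < j2" "j2 < ?n" using tr d2 x1 x2 by auto
  define T where "T = {0, j1, j2}"
  have Tsub: "T \<subseteq> {0..<?n}" unfolding T_def using jj by auto
  have cT: "card T = 3" unfolding T_def using jj by auto
  define B where "B = image_mset (nth xs) (mset_set T)"
  have fT: "finite T" unfolding T_def by simp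
  have msub: "mset_set T \<subseteq># mset_set {0..<?n}"
    by (rule subset_imp_msubset_mset_set[OF Tsub]) simp
  have BM: "B \<subseteq># M" unfolding B_def Mimg by (rule image_mset_subseteq_mono[OF msub])
  have sB: "size B = 3" unfolding B_def using cT by simp
  have MB: "M - B = image_mset (nth xs) (mset_set ({0..<?n} - T))"
    unfolding B_def Mimg mset_set_Diff[OF finite_atLeastLessThan Tsub] image_mset_Diff[OF msub] ..
  have setB: "set_mset B = (nth xs) ` T" unfolding B_def using fT by simp
  have conv0: "0 \<in> convex hull (set_mset B)"
  proof (rule ccontr)
    assume nin: "0 \<notin> convex hull (set_mset B)"
    have fB: "finite (set_mset B)" by (rule finite_set_mset)
    have "closed (convex hull (set_mset B))"
      by (rule compact_imp_closed[OF finite_imp_compact_convex_hull[OF fB]])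
    then have "\<exists>a b. a \<noteq> 0 \<and> 0 < b \<and> (\<forall>x\<in>convex hull (set_mset B). inner a x > b)"
      by (rule separating_hyperplane_closed_0[OF convex_convex_hull _ nin])
    then obtain a b where ab: "a \<noteq> 0" "0 < b" "\<forall>x\<in>convex hull (set_mset B). inner a x > b"
      by blast
    define u where "u = - a"
    have u0: "u \<noteq> 0" using ab unfolding u_def by simp
    have neg: "\<And>j. j \<in> T \<Longrightarrow> inner u (xs ! j) < 0"
    proof -
      fix j assume "j \<in> T"
      then have "xs ! j \<in> set_mset B" unfolding setB by (rule imageI)
      then have "xs ! j \<in> convex hull (set_mset B)" using hull_subset[of "set_mset B" convex] by (rule subsetD[rotated])
      then have "inner a (xs ! j) > b" using ab(3) by blast
      then show "inner u (xs ! j) < 0" using ab(2) unfolding u_def by simp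
    qed
    have "\<exists>t\<in>{0,x1,x2}. \<exists>k::int. ang u - pi/2 \<le> A.\<Theta> t + 2*pi*k \<and> A.\<Theta> t + 2*pi*k \<le> ang u - pi/2 + pi"
      by (rule C.cover[OF tr(4-6)])
    then obtain t and k :: int where t: "t \<in> {0, x1, x2}" and k: "ang u - pi/2 \<le> A.\<Theta> t + 2*pi*k" "A.\<Theta> t + 2*pi*k \<le> ang u - pi/2 + pi"
      by blast
    have "\<exists>j. j \<in> T \<and> t = int j"
    proof -
      consider "t = 0" | "t = x1" | "t = x2" using t by blast
      then show ?thesis
      proof cases
        case 1 then show ?thesis unfolding T_def by (intro exI[where x=0]) simp
      next
        case 2 then show ?thesis unfolding T_def x1 by (intro exI[where x=j1]) simp
      next
        case 3 then show ?thesis unfolding T_def x2 by (intro exI[where x=j2]) simp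
      qed
    qed
    then obtain j where j: "j \<in> T" "t = int j" by blast
    have jn: "j < ?n" using j(1) Tsub by auto
    have Tt: "A.\<Theta> t = ang (xs ! j)" using A.Theta_nat[OF jn] j(2) by simp
    have "inarc (ang u - pi/2) (ang (xs ! j))"
      unfolding inarc_def by (rule exI[where x=k]) (use k Tt in simp)
    then have "0 \<le> inner u (xs ! j)" using inner_inarc[OF u0 nzx[OF jn]] by simp
    then show False using neg[OF j(1)] by simp
  qed
  have depB: "depth (M - B) (d - 1)"
    unfolding depth_def
  proof
    fix u :: "real^2"
    let ?P = "\<lambda>z. 0 \<le> inner u z"
    have cD: "size (filter_mset ?P (M - B)) = card {j\<in>{0..<?n}. ?P (xs ! j)} - card {j\<in>T. ?P (xs ! j)}"
    proof -
      have "size (filter_mset ?P (M - B)) = card {j\<in>{0..<?n} - T. ?P (xs ! j)}"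
        unfolding MB by (rule cnt_img) simp
      also have "{j\<in>{0..<?n} - T. ?P (xs ! j)} = {j\<in>{0..<?n}. ?P (xs ! j)} - {j\<in>T. ?P (xs ! j)}"
        by auto
      also have "card \<dots> = card {j\<in>{0..<?n}. ?P (xs ! j)} - card {j\<in>T. ?P (xs ! j)}"
        by (rule card_Diff_subset) (use fT Tsub in auto)
      finally show ?thesis .
    qed
    show "d - 1 \<le> size (filter_mset ?P (M - B))"
    proof (cases "u = 0")
      case True
      have e1: "{j\<in>{0..<?n}. ?P (xs ! j)} = {0..<?n}" using True by auto
      have e2: "{j\<in>T. ?P (xs ! j)} = T" using True by simp
      have "size (filter_mset ?P (M - B)) = ?n - 3" unfolding cD e1 e2 cT by simp
      then show ?thesis using sz len d2 by simp
    next
      case False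
      define \<alpha> where "\<alpha> = ang u - pi/2"
      have eqP: "\<And>j. j < ?n \<Longrightarrow> ?P (xs ! j) \<longleftrightarrow> inarc \<alpha> (ang (xs ! j))"
        unfolding \<alpha>_def using inner_inarc[OF False nzx] by blast
      let ?I = "{i. \<alpha> \<le> A.\<Theta> i \<and> A.\<Theta> i \<le> \<alpha> + pi}"
      have c1: "card {j\<in>{0..<?n}. ?P (xs ! j)} = card ?I"
      proof -
        have "{j\<in>{0..<?n}. ?P (xs ! j)} = {j. j < ?n \<and> inarc \<alpha> (ang (xs ! j))}" using eqP by auto
        then show ?thesis using A.CNT[of \<alpha>] by simp
      qed
      let ?T' = "int ` {j\<in>T. ?P (xs ! j)}"
      have c2: "card ?T' = card {j\<in>T. ?P (xs ! j)}" by (rule card_image) simp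
      have dI: "d \<le> card ?I" by (rule depTh)
      have finI: "finite ?I"
      proof (rule ccontr)
        assume "infinite ?I" then have "card ?I = 0" by simp
        then show False using dI d2 by simp
      qed
      have convI: "\<forall>a\<in>?I. \<forall>c\<in>?I. \<forall>b. a \<le> b \<and> b \<le> c \<longrightarrow> b \<in> ?I"
      proof (intro ballI allI impI)
        fix a c b assume a: "a \<in> ?I" and c: "c \<in> ?I" and b: "a \<le> b \<and> b \<le> c"
        have "A.\<Theta> a \<le> A.\<Theta> b" "A.\<Theta> b \<le> A.\<Theta> c" using b A.Theta_mono by auto
        then show "b \<in> ?I" using a c by simp
      qed
      have T'sub: "?T' \<subseteq> {0, x1, x2}"
      proof
        fix t assume "t \<in> ?T'"
        then obtain j where j: "j \<in> T" "t = int j" by blast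
        then have "j = 0 \<or> j = j1 \<or> j = j2" unfolding T_def by blast
        then show "t \<in> {0, x1, x2}" using j(2) x1 x2 by auto
      qed
      have liftT: "\<And>t. t \<in> ?T' \<Longrightarrow> \<exists>i\<in>?I. i mod int ?n = t mod int ?n"
      proof -
        fix t assume "t \<in> ?T'"
        then obtain j where j: "j \<in> T" "?P (xs ! j)" "t = int j" by blast
        have jn: "j < ?n" using j Tsub by auto
        obtain i where i: "\<alpha> \<le> A.\<Theta> i" "A.\<Theta> i \<le> \<alpha> + pi" "i mod int ?n = int j"
          using A.lift[OF jn] eqP[OF jn] j(2) by blast
        have "t mod int ?n = t" using j(3) jn by simp
        then show "\<exists>i\<in>?I. i mod int ?n = t mod int ?n" using i j(3) by auto
      qed
      have "card ?T' + d \<le> card ?I + 1"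
        by (rule count_hits[OF finI convI dI _ tr(1-3) T'sub liftT]) (use d2 in simp)
      then show ?thesis unfolding cD c1 using c2 by simp
    qed
  qed
  show ?thesis using BM sB conv0 depB by auto
qed

lemma sep0:
  fixes X :: "(real^2) set"
  assumes "finite X" "0 \<notin> convex hull X"
  obtains u where "\<And>x. x \<in> X \<Longrightarrow> inner u x < 0"
proof -
  have "closed (convex hull X)"
    by (rule compact_imp_closed[OF finite_imp_compact_convex_hull[OF assms(1)]])
  then have "\<exists>a b. a \<noteq> 0 \<and> 0 < b \<and> (\<forall>x\<in>convex hull X. inner a x > b)"
    by (rule separating_hyperplane_closed_0[OF convex_convex_hull _ assms(2)])
  then obtain a b where ab: "0 < b" "\<forall>x\<in>convex hull X. inner a x > b" by blast
  have "\<And>x. x \<in> X \<Longrightarrow> inner (-a) x < 0"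
  proof -
    fix x assume "x \<in> X"
    then have "x \<in> convex hull X" using hull_subset[of X convex] by (rule subsetD[rotated])
    then have "inner a x > b" using ab(2) by blast
    then show "inner (-a) x < 0" using ab(1) by simp
  qed
  then show ?thesis by (rule that)
qed

lemma depth1:
  assumes "depth M 1"
  shows "0 \<in> convex hull (set_mset M)"
proof (rule ccontr)
  assume "0 \<notin> convex hull (set_mset M)"
  then obtain u where u: "\<And>x. x \<in> set_mset M \<Longrightarrow> inner u x < 0"
    using sep0[of "set_mset M"] by blast
  have "filter_mset (\<lambda>z. 0 \<le> inner u z) M = {#}"
    using u by (auto simp: filter_mset_eq_conv) (meson linorder_not_le)
  then show False using assms unfolding depth_def by (metis size_empty not_one_le_zero)
qed

lemma step:
  fixes M :: "(real^2) multiset"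
  assumes dep: "depth M d" and d2: "2 \<le> d" and sz: "3*d \<le> size M"
  shows "\<exists>B. B \<subseteq># M \<and> size B \<le> 3 \<and> 0 \<in> convex hull (set_mset B) \<and> depth (M - B) (d - 1)"
proof (cases "0 \<in># M")
  case False
  then show ?thesis using step_nz[OF _ dep d2 sz] by blast
next
  case True
  define B where "B = {#0::real^2#}"
  have BM: "B \<subseteq># M" unfolding B_def using True by simp
  have c: "0 \<in> convex hull (set_mset B)" unfolding B_def by simp
  have "depth (M - B) (d - 1)"
    unfolding depth_def
  proof
    fix u :: "real^2"
    let ?P = "\<lambda>z. 0 \<le> inner u z"
    have fB: "filter_mset ?P B = B" unfolding B_def by simp
    have "filter_mset ?P B \<subseteq># filter_mset ?P M" by (rule multiset_filter_mono[OF BM])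
    then have "size (filter_mset ?P (M - B)) = size (filter_mset ?P M) - 1"
      using fB by (simp add: size_Diff_submset B_def)
    then show "d - 1 \<le> size (filter_mset ?P (M - B))"
      using dep unfolding depth_def by (metis diff_le_mono)
  qed
  moreover have "size B \<le> 3" unfolding B_def by simp
  ultimately show ?thesis using BM c by blast
qed

lemma PL:
  fixes M :: "(real^2) multiset"
  shows "depth M (Suc d) \<Longrightarrow> 3 * Suc d \<le> size M \<Longrightarrow>
    \<exists>A. (\<Sum>i<Suc d. A i) = M \<and> (\<forall>i<Suc d. 0 \<in> convex hull (set_mset (A i)))"
proof (induction d arbitrary: M)
  case 0
  have "(\<Sum>i<Suc 0. (\<lambda>_. M) i) = M" by simp
  moreover have "\<forall>i<Suc 0. 0 \<in> convex hull (set_mset ((\<lambda>_. M) i))" using depth1 0 by simp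
  ultimately show ?case by blast
next
  case (Suc d)
  obtain B where B: "B \<subseteq># M" "size B \<le> 3" "0 \<in> convex hull (set_mset B)" "depth (M - B) (Suc d)"
    using step[OF Suc.prems(1) _ Suc.prems(2)] by auto
  have "size (M - B) = size M - size B" by (rule size_Diff_submset[OF B(1)])
  then have "3 * Suc d \<le> size (M - B)" using Suc.prems(2) B(2) by simp
  then obtain A where A: "(\<Sum>i<Suc d. A i) = M - B" "\<forall>i<Suc d. 0 \<in> convex hull (set_mset (A i))"
    using Suc.IH[OF B(4)] by blast
  define A' where "A' = A(Suc d := B)"
  have "(\<Sum>i<Suc (Suc d). A' i) = (\<Sum>i<Suc d. A' i) + A' (Suc d)" by simp
  also have "(\<Sum>i<Suc d. A' i) = (\<Sum>i<Suc d. A i)" unfolding A'_def by (rule sum.cong) auto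
  also have "A' (Suc d) = B" unfolding A'_def by simp
  finally have "(\<Sum>i<Suc (Suc d). A' i) = M" using A(1) B(1) by (simp add: subset_mset.diff_add)
  moreover have "\<forall>i<Suc (Suc d). 0 \<in> convex hull (set_mset (A' i))"
    using A(2) B(3) unfolding A'_def by (auto simp: less_Suc_eq)
  ultimately show ?case by blast
qed

lemma finite_submsets: "finite {T. T \<subseteq># (M::'a multiset)}"
proof -
  have "{T. T \<subseteq># M} \<subseteq> mset ` {ys. set ys \<subseteq> set_mset M \<and> length ys \<le> size M}"
  proof
    fix T assume "T \<in> {T. T \<subseteq># M}"
    then have T: "T \<subseteq># M" by simp
    obtain ys where ys: "mset ys = T" using ex_mset by blast
    have "set ys \<subseteq> set_mset M" using ys T by (metis set_mset_mono set_mset_mset)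
    moreover have "length ys \<le> size M" using ys T by (metis size_mset size_mset_mono)
    ultimately show "T \<in> mset ` {ys. set ys \<subseteq> set_mset M \<and> length ys \<le> size M}" using ys by blast
  qed
  moreover have "finite (mset ` {ys. set ys \<subseteq> set_mset M \<and> length ys \<le> size M})"
    by (rule finite_imageI, rule finite_lists_length_le) simp
  ultimately show ?thesis by (rule finite_subset)
qed

lemma mem_sum_le: "finite G \<Longrightarrow> g \<in> G \<Longrightarrow> f g \<subseteq># (\<Sum>x\<in>G. f x :: 'a multiset)"
  using sum.remove[of G g f] by (simp add: mset_subset_eq_add_left)

lemma size_sum_le: "finite G \<Longrightarrow> (\<forall>g\<in>G. size (f g :: 'a multiset) \<le> k) \<Longrightarrow> size (\<Sum>x\<in>G. f x) \<le> card G * k"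
proof (induction G rule: finite_induct)
  case empty then show ?case by simp
next
  case (insert x F) then show ?case by simp
qed

lemma img_sum: fixes m :: nat and A :: "nat \<Rightarrow> 'a multiset" shows "image_mset f (\<Sum>i<m. A i) = (\<Sum>i<m. image_mset f (A i))"
  by (induction m) simp_all

lemma centerpoint:
  fixes S :: "(real^2) set" and M :: "(real^2) multiset"
  assumes H: "helly_prop S h" and MS: "set_mset M \<subseteq> S" and N: "h * k < size M"
  shows "\<exists>p\<in>S. \<forall>T. T \<subseteq># M \<and> size T \<le> k \<longrightarrow> p \<in> convex hull (set_mset (M - T))"
proof -
  define \<T> where "\<T> = {T. T \<subseteq># M \<and> size T \<le> k}"
  define F where "F = (\<lambda>T. convex hull (set_mset (M - T))) ` \<T>"
  have finT: "finite \<T>" unfolding \<T>_def by (rule finite_subset[OF _ finite_submsets[of M]]) auto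
  have finF: "finite F" unfolding F_def using finT by simp
  have convF: "\<forall>C\<in>F. convex C" unfolding F_def by (simp add: convex_convex_hull)
  have sub: "\<forall>G\<subseteq>F. card G \<le> h \<longrightarrow> \<Inter>G \<inter> S \<noteq> {}"
  proof (intro allI impI)
    fix G assume G: "G \<subseteq> F" "card G \<le> h"
    have finG: "finite G" using finite_subset[OF G(1) finF] .
    define tf where "tf = (\<lambda>C. SOME T. T \<in> \<T> \<and> C = convex hull (set_mset (M - T)))"
    have tf: "\<And>C. C \<in> G \<Longrightarrow> tf C \<in> \<T> \<and> C = convex hull (set_mset (M - tf C))"
    proof -
      fix C assume "C \<in> G"
      then have "\<exists>T. T \<in> \<T> \<and> C = convex hull (set_mset (M - T))" using G(1) unfolding F_def by blast
      then show "tf C \<in> \<T> \<and> C = convex hull (set_mset (M - tf C))" unfolding tf_def by (rule someI_ex)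
    qed
    define R where "R = (\<Sum>C\<in>G. tf C)"
    have "size R \<le> card G * k" unfolding R_def
      by (rule size_sum_le[OF finG]) (use tf in \<open>auto simp: \<T>_def\<close>)
    also have "\<dots> \<le> h * k" using G(2) by simp
    finally have "size R < size M" using N by simp
    have "size M - size R \<le> size (M - R)" by (rule diff_size_le_size_Diff)
    then have "0 < size (M - R)" using \<open>size R < size M\<close> by linarith
    then have "M - R \<noteq> {#}" by auto
    then obtain x where x: "x \<in># M - R" by blast
    have xM: "x \<in># M" using x by (rule in_diffD)
    have "x \<in> \<Inter>G"
    proof
      fix C assume C: "C \<in> G"
      have "tf C \<subseteq># R" unfolding R_def by (rule mem_sum_le[OF finG C])
      then have "count (tf C) x \<le> count R x" by (rule mset_subset_eq_count)
      then have "count (M - R) x \<le> count (M - tf C) x" by simp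
      moreover have "0 < count (M - R) x" using x by (simp only: count_greater_zero_iff)
      ultimately have "0 < count (M - tf C) x" by linarith
      then have "x \<in># M - tf C" by (simp only: count_greater_zero_iff)
      then have "x \<in> convex hull (set_mset (M - tf C))"
        using hull_subset[of "set_mset (M - tf C)" convex] by (rule subsetD[rotated])
      then show "x \<in> C" using tf[OF C] by simp
    qed
    moreover have "x \<in> S" using xM MS by blast
    ultimately show "\<Inter>G \<inter> S \<noteq> {}" by blast
  qed
  have "finite F \<and> (\<forall>C\<in>F. convex C) \<longrightarrow> (\<forall>G\<subseteq>F. card G \<le> h \<longrightarrow> \<Inter>G \<inter> S \<noteq> {}) \<longrightarrow> \<Inter>F \<inter> S \<noteq> {}"
    using H unfolding helly_prop_def by (rule spec)
  then have "\<Inter>F \<inter> S \<noteq> {}" using finF convF sub by blast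
  then obtain p where p: "p \<in> \<Inter>F" "p \<in> S" by blast
  have "\<forall>T. T \<subseteq># M \<and> size T \<le> k \<longrightarrow> p \<in> convex hull (set_mset (M - T))"
  proof (intro allI impI)
    fix T assume "T \<subseteq># M \<and> size T \<le> k"
    then have "convex hull (set_mset (M - T)) \<in> F" unfolding F_def \<T>_def by blast
    then show "p \<in> convex hull (set_mset (M - T))" using p(1) by blast
  qed
  then show ?thesis using p(2) by blast
qed

lemma depth_shift:
  fixes M :: "(real^2) multiset" and p :: "real^2"
  assumes cp: "\<forall>T. T \<subseteq># M \<and> size T \<le> k \<longrightarrow> p \<in> convex hull (set_mset (M - T))"
  shows "depth (image_mset (\<lambda>x. x - p) M) (Suc k)"
  unfolding depth_def
proof
  fix u :: "real^2"
  show "Suc k \<le> size (filter_mset (\<lambda>z. 0 \<le> inner u z) (image_mset (\<lambda>x. x - p) M))"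
  proof (rule ccontr)
    assume nlt: "\<not> Suc k \<le> size (filter_mset (\<lambda>z. 0 \<le> inner u z) (image_mset (\<lambda>x. x - p) M))"
    define T where "T = filter_mset (\<lambda>x. 0 \<le> inner u (x - p)) M"
    have "size T = size (filter_mset (\<lambda>z. 0 \<le> inner u z) (image_mset (\<lambda>x. x - p) M))"
      unfolding T_def by (simp add: filter_mset_image_mset)
    then have sT: "size T \<le> k" using nlt by simp
    have TM: "T \<subseteq># M" unfolding T_def by simp
    have pc: "p \<in> convex hull (set_mset (M - T))" using cp TM sT by blast
    define Fm where "Fm = filter_mset (\<lambda>x. \<not> 0 \<le> inner u (x - p)) M"
    have eq: "M = T + Fm" unfolding T_def Fm_def by (rule multiset_partition)
    have MT: "M - T = Fm" by (subst eq) simp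
    have Fm: "\<And>x. x \<in># Fm \<Longrightarrow> inner u x < inner u p"
      unfolding Fm_def by (simp add: inner_diff_right)
    have "set_mset (M - T) \<subseteq> {y. inner u y < inner u p}"
      unfolding MT using Fm by blast
    moreover have "convex {y. inner u y < inner u p}" by (rule convex_halfspace_lt)
    ultimately have "convex hull (set_mset (M - T)) \<subseteq> {y. inner u y < inner u p}"
      by (rule hull_minimal)
    then have "inner u p < inner u p" using pc by blast
    then show False by simp
  qed
qed

lemma tv:
  fixes S :: "(real^2) set"
  assumes H: "helly_prop S h" and m1: "1 \<le> m" and N: "h * (m - 1) < N" and N3: "3 * m \<le> N"
  shows "tverberg_prop S m N"
  unfolding tverberg_prop_def
proof (intro allI impI)
  fix M :: "(real^2) multiset" assume MN: "set_mset M \<subseteq> S \<and> size M = N"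
  obtain p where p: "p \<in> S" "\<forall>T. T \<subseteq># M \<and> size T \<le> m - 1 \<longrightarrow> p \<in> convex hull (set_mset (M - T))"
    using centerpoint[OF H _ , of M "m - 1"] MN N by auto
  define M' where "M' = image_mset (\<lambda>x. x - p) M"
  have dM: "depth M' (Suc (m - 1))" unfolding M'_def by (rule depth_shift[OF p(2)])
  have sM: "3 * Suc (m - 1) \<le> size M'" unfolding M'_def using MN N3 m1 by simp
  obtain A where A: "(\<Sum>i<Suc (m - 1). A i) = M'" "\<forall>i<Suc (m - 1). 0 \<in> convex hull (set_mset (A i))"
    using PL[OF dM sM] by blast
  have sm: "Suc (m - 1) = m" using m1 by simp
  define A' where "A' = (\<lambda>i. image_mset (\<lambda>x. p + x) (A i))"
  have "(\<Sum>i<m. A' i) = image_mset (\<lambda>x. p + x) (\<Sum>i<m. A i)"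
    unfolding A'_def by (rule img_sum[symmetric])
  also have "\<dots> = M" using A(1) unfolding sm M'_def by (simp add: multiset.map_comp o_def)
  finally have sumA: "(\<Sum>i<m. A' i) = M" .
  have "\<forall>i<m. p \<in> convex hull (set_mset (A' i))"
  proof (intro allI impI)
    fix i assume "i < m"
    then have "0 \<in> convex hull (set_mset (A i))" using A(2) sm by simp
    then have "p + 0 \<in> (\<lambda>x. p + x) ` (convex hull (set_mset (A i)))" by (rule imageI)
    then show "p \<in> convex hull (set_mset (A' i))"
      unfolding A'_def set_image_mset convex_hull_translation by simp
  qed
  then have "p \<in> (\<Inter>i<m. convex hull (set_mset (A' i))) \<inter> S" using p(1) by blast
  then show "\<exists>A :: nat \<Rightarrow> (real^2) multiset. (\<Sum>i<m. A i) = M \<and>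
             (\<Inter>i<m. convex hull (set_mset (A i))) \<inter> S \<noteq> {}" using sumA by blast
qed

lemma tv_num:
  assumes "tverberg_prop S m N" "0 < N"
  shows "tverberg_number S m \<le> enat N"
proof -
  have ex: "\<exists>n>0. tverberg_prop S m n" using assms by blast
  have "(LEAST n. n > 0 \<and> tverberg_prop S m n) \<le> N" by (rule Least_le) (use assms in simp)
  then show ?thesis unfolding tverberg_number_def using ex by simp
qed

lemma helly_of_num:
  assumes "helly_number S = enat h"
  shows "helly_prop S h"
proof -
  have ex: "\<exists>h>0. helly_prop S h"
  proof (rule ccontr)
    assume "\<not> ?thesis" then have "helly_number S = \<infinity>" unfolding helly_number_def by simp
    then show False using assms by simp
  qed
  then have "h = (LEAST h. h > 0 \<and> helly_prop S h)" using assms unfolding helly_number_def by simp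
  moreover have "(LEAST h. h > 0 \<and> helly_prop S h) > 0 \<and> helly_prop S (LEAST h. h > 0 \<and> helly_prop S h)"
    using ex by (rule LeastI_ex)
  ultimately show ?thesis by simp
qed

theorem lemma5:
  fixes S :: "(real^2) set" and h :: nat
  assumes "discrete_set S"
    and "helly_number S = enat h" and "h \<ge> 4"
  shows "(\<forall>m::nat. m \<ge> 3 \<longrightarrow> tverberg_number S m \<le> enat (h * (m - 1) + 1))
         \<and> tverberg_number S 2 \<le> enat (h + 2)"
proof -
  have H: "helly_prop S h" using assms(2) by (rule helly_of_num)
  have A: "\<forall>m::nat. m \<ge> 3 \<longrightarrow> tverberg_number S m \<le> enat (h * (m - 1) + 1)"
  proof (intro allI impI)
    fix m :: nat assume m3: "m \<ge> 3"
    have "4 * (m - 1) \<le> h * (m - 1)" using assms(3) by (rule mult_right_mono) simp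
    then have N3: "3 * m \<le> h * (m - 1) + 1" using m3 by linarith
    have "tverberg_prop S m (h * (m - 1) + 1)" by (rule tv[OF H]) (use m3 N3 in auto)
    then show "tverberg_number S m \<le> enat (h * (m - 1) + 1)" by (rule tv_num) simp
  qed
  have "tverberg_prop S 2 (h + 2)" by (rule tv[OF H]) (use assms(3) in auto)
  then have B: "tverberg_number S 2 \<le> enat (h + 2)" by (rule tv_num) simp
  show ?thesis using A B by blast
qed

end
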